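(* Let $\kappa$ be a regular uncountable cardinal and $I$ an ideal on $\kappa$. Then $I$ is pleasant if and only if $I$ is densely pleasant, i.e. for every $A\in I^+$ there is $B\in (I\restriction A)^+$ such that $I\restriction B$ is pleasant.
   Context: An ideal on $\kappa$ is a family of subsets of $\kappa$ closed under subsets and finite unions, which is $<\kappa$-complete and contains all singletons. $I^+=\{X\subseteq\kappa: X\notin I\}$, and for $A\in I^+$, $I\restriction A=\{X\subseteq\kappa: X\cap A\in I\}$. For $A\subseteq\kappa$ and $X_\alpha\subseteq\kappa$, $\bigtriangledown_{\alpha\in A}X_\alpha=\{\xi<\kappa:\exists\alpha<\xi\,(\alpha\in A\wedge \xi\in X_\alpha)\}$. $I$ is pleasant if whenever $A\in I$ and $X_\alpha\in I$ for all $\alpha$, then $\bigtriangledown_{\alpha\in A}X_\alpha\in I$. *)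

theory Defs
  imports Main
begin

text \<open>The cardinal kappa is represented by a type 'k together with a cardinal
  well-order r on UNIV :: 'k set (so kappa = UNIV, ordinals below kappa are
  the elements of 'k, and alpha < xi means (alpha, xi) in r, alpha ~= xi).\<close>

definition strict_less :: "'k rel \<Rightarrow> 'k \<Rightarrow> 'k \<Rightarrow> bool" where
  "strict_less r a b \<longleftrightarrow> (a, b) \<in> r \<and> a \<noteq> b"

definition is_ideal :: "'k rel \<Rightarrow> 'k set set \<Rightarrow> bool" where
  "is_ideal r I \<longleftrightarrow>
     (\<forall>X Y. X \<in> I \<and> Y \<subseteq> X \<longrightarrow> Y \<in> I) \<and>
     (\<forall>X Y. X \<in> I \<and> Y \<in> I \<longrightarrow> X \<union> Y \<in> I) \<and>
     (\<forall>F. F \<subseteq> I \<and> (card_of F, r) \<in> ordLess \<longrightarrow> \<Union>F \<in> I) \<and>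
     (\<forall>a. {a} \<in> I)"

definition restr_ideal :: "'k set set \<Rightarrow> 'k set \<Rightarrow> 'k set set" where
  "restr_ideal I A = {X. X \<inter> A \<in> I}"

definition diag_union :: "'k rel \<Rightarrow> 'k set \<Rightarrow> ('k \<Rightarrow> 'k set) \<Rightarrow> 'k set" where
  "diag_union r A X = {\<xi>. \<exists>\<alpha>. strict_less r \<alpha> \<xi> \<and> \<alpha> \<in> A \<and> \<xi> \<in> X \<alpha>}"

definition pleasant :: "'k rel \<Rightarrow> 'k set set \<Rightarrow> bool" where
  "pleasant r I \<longleftrightarrow> (\<forall>A X. A \<in> I \<and> (\<forall>\<alpha>. X \<alpha> \<in> I) \<longrightarrow> diag_union r A X \<in> I)"

definition densely_pleasant :: "'k rel \<Rightarrow> 'k set set \<Rightarrow> bool" where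
  "densely_pleasant r I \<longleftrightarrow>
     (\<forall>A. A \<notin> I \<longrightarrow> (\<exists>B. B \<notin> restr_ideal I A \<and> pleasant r (restr_ideal I B)))"

end

theory Submission
  imports Defs
begin

theorem proposition2p6:
  fixes r :: "'k rel" and I :: "'k set set"
  assumes "card_order r" and "regularCard r" and "(natLeq, r) \<in> ordLess"
    and "is_ideal r I"
  shows "pleasant r I \<longleftrightarrow> densely_pleasant r I"
proof
  assume p: "pleasant r I"
  have "restr_ideal I UNIV = I" by (simp add: restr_ideal_def)
  then show "densely_pleasant r I" using p
    unfolding densely_pleasant_def by (metis Int_UNIV_left mem_Collect_eq restr_ideal_def)
next
  assume d: "densely_pleasant r I"
  have down: "\<And>X Y. X \<in> I \<Longrightarrow> Y \<subseteq> X \<Longrightarrow> Y \<in> I"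
    using assms(4) unfolding is_ideal_def by blast
  show "pleasant r I"
    unfolding pleasant_def
  proof (intro allI impI)
    fix A and X :: "'k \<Rightarrow> 'k set" assume h: "A \<in> I \<and> (\<forall>\<alpha>. X \<alpha> \<in> I)"
    show "diag_union r A X \<in> I"
    proof (rule ccontr)
      assume n: "diag_union r A X \<notin> I"
      then obtain B where B: "B \<notin> restr_ideal I (diag_union r A X)"
        and pB: "pleasant r (restr_ideal I B)"
        using d unfolding densely_pleasant_def by blast
      have "A \<in> restr_ideal I B" using h down unfolding restr_ideal_def by blast
      moreover have "\<forall>\<alpha>. X \<alpha> \<in> restr_ideal I B" using h down unfolding restr_ideal_def by blast
      ultimately have "diag_union r A X \<in> restr_ideal I B"
        using pB unfolding pleasant_def by blast
      then show False using B unfolding restr_ideal_def by (simp add: Int_commute)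
    qed
  qed
qed

end
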